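(* Let $\mathcal N$ be a feed-forward ReLU network with input dimension $n_{\mathrm{in}}$ whose parameter vector $\theta$ is random with a distribution absolutely continuous with respect to Lebesgue measure, let $\mathcal C\subset\mathbb R^{n_{\mathrm{in}}}$ be a closed cube, and let $r\in\{0,\dots,n_{\mathrm{in}}\}$. With probability $1$, for every $k\in\{0,\dots,n_{\mathrm{in}}\}$ the set $\mathcal V_k(\theta)$ consists of isolated points, and $$\#\{r\text{-partial activation regions }\mathcal R(\mathcal A;\theta)\text{ with }\mathcal R(\mathcal A;\theta)\cap\mathcal C\neq\emptyset\}\le\sum_{k=r}^{n_{\mathrm{in}}}\binom{k}{r}2^{k-r}\,\#\mathcal V_k(\theta).$$
   Context: A feed-forward ReLU network $\mathcal N$ with input dimension $n_{\mathrm{in}}$ has hidden layers $1,\dots,d$; edges only between consecutive layers (arbitrary connectivity, no tied weights). A neuron $z$ in layer $1$ has pre-activation $z(x;\theta)=\sum_i w_{z,i}x_i$; a neuron $z$ in layer $\ell\ge2$ has pre-activation $z(x;\theta)=\sum_{z'}w_{z,z'}\max\{0,z'(x;\theta)-b_{z'}\}$ over neurons $z'$ of layer $\ell-1$ joined to $z$; $b_z$ is its bias. $\theta$ is the vector of all weights and biases. Let $\mathrm{sgn}(t)=1,0,-1$ for $t>0,t=0,t<0$. An $r$-partial activation pattern is $\mathcal A=\{a_z\}\in\{-1,0,1\}^{\#\mathrm{neurons}}$ with exactly $r$ neurons having $a_z=0$; its $r$-partial activation region is $\mathcal R(\mathcal A;\theta)=\{x:\ \mathrm{sgn}(z(x;\theta)-b_z)=a_z\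 \forall z\}$. $H_z(\theta)=\{x:z(x;\theta)=b_z\}$; $X_{\mathcal N,k}(\theta)$ is the set of $x$ for which there are exactly $k$ neurons $z$ with $x\in H_z(\theta)$. $\mathcal C_k$ is the $k$-dimensional skeleton of $\mathcal C$, i.e. the union of its $k$-dimensional faces ($\mathcal C_0$ = the vertices, $\mathcal C_{n_{\mathrm{in}}}=\mathcal C$). $\mathcal V_k(\theta)=X_{\mathcal N,k}(\theta)\cap\mathcal C_k$, and $\#\mathcal V_k$ is its cardinality. *)

theory Defs
  imports "HOL-Probability.Probability"
begin

datatype ('a, 'n) param = WIn 'a 'n | W 'a 'a | B 'a

definition arch_ok :: "('a \<Rightarrow> nat) \<Rightarrow> ('a \<Rightarrow> 'a \<Rightarrow> bool) \<Rightarrow> bool" where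
  "arch_ok layer E \<longleftrightarrow> (\<forall>z. 1 \<le> layer z) \<and> (\<forall>z' z. E z' z \<longrightarrow> layer z = Suc (layer z'))"

definition params :: "('a \<Rightarrow> nat) \<Rightarrow> ('a \<Rightarrow> 'a \<Rightarrow> bool) \<Rightarrow> ('a, 'n) param set" where
  "params layer E = {WIn z i | z i. layer z = 1} \<union> {W z z' | z z'. E z' z} \<union> range B"

fun pa :: "nat \<Rightarrow> ('a::finite \<Rightarrow> 'a \<Rightarrow> bool) \<Rightarrow> (('a, 'n::finite) param \<Rightarrow> real)
           \<Rightarrow> 'a \<Rightarrow> real^'n \<Rightarrow> real" where
  "pa 0 E \<theta> z x = (\<Sum>i\<in>UNIV. \<theta> (WIn z i) * x $ i)"
| "pa (Suc k) E \<theta> z x =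
     (\<Sum>z'\<in>{z'. E z' z}. \<theta> (W z z') * max 0 (pa k E \<theta> z' x - \<theta> (B z')))"

definition preact :: "('a::finite \<Rightarrow> nat) \<Rightarrow> ('a \<Rightarrow> 'a \<Rightarrow> bool) \<Rightarrow> (('a, 'n::finite) param \<Rightarrow> real)
           \<Rightarrow> 'a \<Rightarrow> real^'n \<Rightarrow> real" where
  "preact layer E \<theta> z x = pa (layer z - 1) E \<theta> z x"

definition partial_pattern :: "nat \<Rightarrow> ('a::finite \<Rightarrow> real) \<Rightarrow> bool" where
  "partial_pattern r A \<longleftrightarrow> (\<forall>z. A z \<in> {-1, 0, 1}) \<and> card {z. A z = 0} = r"

definition region :: "('a::finite \<Rightarrow> nat) \<Rightarrow> ('a \<Rightarrow> 'a \<Rightarrow> bool) \<Rightarrow> ('a \<Rightarrow> real)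
           \<Rightarrow> (('a, 'n::finite) param \<Rightarrow> real) \<Rightarrow> (real^'n) set" where
  "region layer E A \<theta> = {x. \<forall>z. sgn (preact layer E \<theta> z x - \<theta> (B z)) = A z}"

definition Xset :: "('a::finite \<Rightarrow> nat) \<Rightarrow> ('a \<Rightarrow> 'a \<Rightarrow> bool)
           \<Rightarrow> (('a, 'n::finite) param \<Rightarrow> real) \<Rightarrow> nat \<Rightarrow> (real^'n) set" where
  "Xset layer E \<theta> k = {x. card {z. preact layer E \<theta> z x = \<theta> (B z)} = k}"

definition cube :: "real^'n \<Rightarrow> real \<Rightarrow> (real^'n) set" where
  "cube a s = {x. \<forall>i. a $ i \<le> x $ i \<and> x $ i \<le> a $ i + s}"

definition cube_face :: "real^'n \<Rightarrow> real \<Rightarrow> 'n set \<Rightarrow> ('n \<Rightarrow> bool) \<Rightarrow> (real^'n) set" where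
  "cube_face a s S up = {x \<in> cube a s. \<forall>i\<in>S. x $ i = (if up i then a $ i + s else a $ i)}"

definition skeleton :: "real^'n::finite \<Rightarrow> real \<Rightarrow> nat \<Rightarrow> (real^'n) set" where
  "skeleton a s k = (\<Union>{cube_face a s S up | S up. card S + k = CARD('n)})"

definition ecard :: "'b set \<Rightarrow> enat" where
  "ecard X = (if finite X then enat (card X) else \<infinity>)"

end

theory Submission
  imports Defs "HOL-Analysis.Analysis"
begin


fun lcf :: "nat \<Rightarrow> ('a::finite \<Rightarrow> 'a \<Rightarrow> bool) \<Rightarrow> 'a set \<Rightarrow> (('a, 'n::finite) param \<Rightarrow> real) \<Rightarrow> 'a \<Rightarrow> 'n \<Rightarrow> real" where
  "lcf 0 E P \<theta> z i = \<theta> (WIn z i)"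
| "lcf (Suc k) E P \<theta> z i = (\<Sum>z'\<in>{z'. E z' z}. if z' \<in> P then \<theta> (W z z') * lcf k E P \<theta> z' i else 0)"

fun ldf :: "nat \<Rightarrow> ('a::finite \<Rightarrow> 'a \<Rightarrow> bool) \<Rightarrow> 'a set \<Rightarrow> (('a, 'n::finite) param \<Rightarrow> real) \<Rightarrow> 'a \<Rightarrow> real" where
  "ldf 0 E P \<theta> z = 0"
| "ldf (Suc k) E P \<theta> z = (\<Sum>z'\<in>{z'. E z' z}. if z' \<in> P then \<theta> (W z z') * (ldf k E P \<theta> z' - \<theta> (B z')) else 0)"

definition lin :: "nat \<Rightarrow> ('a::finite \<Rightarrow> 'a \<Rightarrow> bool) \<Rightarrow> 'a set \<Rightarrow> (('a, 'n::finite) param \<Rightarrow> real) \<Rightarrow> 'a \<Rightarrow> real^'n \<Rightarrow> real" where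
  "lin k E P \<theta> z x = (\<Sum>i\<in>UNIV. lcf k E P \<theta> z i * x $ i) + ldf k E P \<theta> z"

lemma lin_0: "lin 0 E P \<theta> z x = pa 0 E \<theta> z x"
  by (simp add: lin_def)

lemma lin_Suc: "lin (Suc k) E P \<theta> z x = (\<Sum>z'\<in>{z'. E z' z}. if z' \<in> P then \<theta> (W z z') * (lin k E P \<theta> z' x - \<theta> (B z')) else 0)"
proof -
  have "lin (Suc k) E P \<theta> z x = (\<Sum>i\<in>UNIV. \<Sum>z'\<in>{z'. E z' z}. (if z' \<in> P then \<theta> (W z z') * lcf k E P \<theta> z' i else 0) * x $ i)
     + (\<Sum>z'\<in>{z'. E z' z}. if z' \<in> P then \<theta> (W z z') * (ldf k E P \<theta> z' - \<theta> (B z')) else 0)"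
    by (simp add: lin_def sum_distrib_right)
  also have "\<dots> = (\<Sum>z'\<in>{z'. E z' z}. \<Sum>i\<in>UNIV. (if z' \<in> P then \<theta> (W z z') * lcf k E P \<theta> z' i else 0) * x $ i)
     + (\<Sum>z'\<in>{z'. E z' z}. if z' \<in> P then \<theta> (W z z') * (ldf k E P \<theta> z' - \<theta> (B z')) else 0)"
    by (subst sum.swap) simp
  also have "\<dots> = (\<Sum>z'\<in>{z'. E z' z}. if z' \<in> P then \<theta> (W z z') * (lin k E P \<theta> z' x - \<theta> (B z')) else 0)"
    by (simp add: sum.distrib[symmetric] lin_def sum_distrib_left algebra_simps if_distrib cong: if_cong)
  finally show ?thesis .
qed

lemma pa_lin:
  assumes arch: "arch_ok layer E"
    and H: "\<And>z'. z' \<in> P \<longleftrightarrow> pa (layer z' - 1) E \<theta> z' x > \<theta> (B z')"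
  shows "layer z = Suc k \<Longrightarrow> pa k E \<theta> z x = lin k E P \<theta> z x"
proof (induction k arbitrary: z)
  case 0 then show ?case by (simp add: lin_0)
next
  case (Suc k)
  have "pa (Suc k) E \<theta> z x = (\<Sum>z'\<in>{z'. E z' z}. if z' \<in> P then \<theta> (W z z') * (lin k E P \<theta> z' x - \<theta> (B z')) else 0)"
  proof (simp, rule sum.cong)
    fix z' assume "z' \<in> {z'. E z' z}"
    then have l: "layer z' = Suc k" using arch Suc.prems by (auto simp: arch_ok_def)
    then show "\<theta> (W z z') * max 0 (pa k E \<theta> z' x - \<theta> (B z')) = (if z' \<in> P then \<theta> (W z z') * (lin k E P \<theta> z' x - \<theta> (B z')) else 0)"
      using H[of z'] Suc.IH[OF l] by auto
  qed simp
  then show ?case by (simp add: lin_Suc)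
qed

lemma pa_lin2:
  assumes arch: "arch_ok layer E"
    and H: "\<And>z'. z' \<in> P \<longleftrightarrow> lin (layer z' - 1) E P \<theta> z' x > \<theta> (B z')"
  shows "layer z = Suc k \<Longrightarrow> pa k E \<theta> z x = lin k E P \<theta> z x"
proof (induction k arbitrary: z)
  case 0 then show ?case by (simp add: lin_0)
next
  case (Suc k)
  have "pa (Suc k) E \<theta> z x = (\<Sum>z'\<in>{z'. E z' z}. if z' \<in> P then \<theta> (W z z') * (lin k E P \<theta> z' x - \<theta> (B z')) else 0)"
  proof (simp, rule sum.cong)
    fix z' assume "z' \<in> {z'. E z' z}"
    then have l: "layer z' = Suc k" using arch Suc.prems by (auto simp: arch_ok_def)
    then show "\<theta> (W z z') * max 0 (pa k E \<theta> z' x - \<theta> (B z')) = (if z' \<in> P then \<theta> (W z z') * (lin k E P \<theta> z' x - \<theta> (B z')) else 0)"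
      using H[of z'] Suc.IH[OF l] by auto
  qed simp
  then show ?case by (simp add: lin_Suc)
qed

definition linp :: "('a::finite \<Rightarrow> nat) \<Rightarrow> ('a \<Rightarrow> 'a \<Rightarrow> bool) \<Rightarrow> 'a set \<Rightarrow> (('a, 'n::finite) param \<Rightarrow> real) \<Rightarrow> 'a \<Rightarrow> real^'n \<Rightarrow> real" where
  "linp layer E P \<theta> z x = lin (layer z - 1) E P \<theta> z x"

lemma preact_linp:
  assumes arch: "arch_ok layer E"
    and H: "\<And>z'. z' \<in> P \<longleftrightarrow> preact layer E \<theta> z' x > \<theta> (B z')"
  shows "preact layer E \<theta> z x = linp layer E P \<theta> z x"
proof -
  have "layer z = Suc (layer z - 1)" using arch by (auto simp: arch_ok_def) (metis One_nat_def Suc_pred less_eq_Suc_le)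
  then show ?thesis using pa_lin[OF arch, of P \<theta> x z "layer z - 1"] H by (simp add: preact_def linp_def)
qed

lemma preact_linp2:
  assumes arch: "arch_ok layer E"
    and H: "\<And>z'. z' \<in> P \<longleftrightarrow> linp layer E P \<theta> z' x > \<theta> (B z')"
  shows "preact layer E \<theta> z x = linp layer E P \<theta> z x"
proof -
  have "layer z = Suc (layer z - 1)" using arch by (auto simp: arch_ok_def) (metis One_nat_def Suc_pred less_eq_Suc_le)
  then show ?thesis using pa_lin2[OF arch, of P \<theta> x z "layer z - 1"] H by (simp add: preact_def linp_def)
qed



definition hs :: "((real^'n::finite) \<times> real) set \<Rightarrow> (real^'n) set" where
  "hs Q = {x. \<forall>q\<in>Q. fst q \<bullet> x = snd q}"

lemma hs_insert: "hs (insert q Q) = hs Q \<inter> {x. fst q \<bullet> x = snd q}"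
  by (auto simp: hs_def)

lemma hs_empty: "hs {} = UNIV" by (auto simp: hs_def)

lemma affine_hs: "finite Q \<Longrightarrow> affine (hs Q)"
  by (induction Q rule: finite_induct) (auto simp: hs_insert hs_empty affine_hyperplane)

lemma aff_dim_hs_lower:
  fixes Q :: "((real^'n::finite) \<times> real) set"
  shows "finite Q \<Longrightarrow> hs Q \<noteq> {} \<Longrightarrow> aff_dim (hs Q) \<ge> int CARD('n) - int (card Q)"
proof (induction Q rule: finite_induct)
  case empty then show ?case by (simp add: hs_empty)
next
  case (insert q Q)
  have ne: "hs Q \<noteq> {}" using insert.prems by (auto simp: hs_insert)
  have "aff_dim (hs (insert q Q)) \<ge> aff_dim (hs Q) - 1"
    using aff_dim_affine_Int_hyperplane[OF affine_hs[OF insert.hyps(1)], of "fst q" "snd q"] insert.prems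
    by (auto simp: hs_insert split: if_splits)
  then show ?case using insert.IH[OF ne] insert.hyps by simp
qed



definition Sol :: "('a::finite \<Rightarrow> nat) \<Rightarrow> ('a \<Rightarrow> 'a \<Rightarrow> bool) \<Rightarrow> 'a set \<Rightarrow> (('a, 'n::finite) param \<Rightarrow> real)
   \<Rightarrow> 'a set \<Rightarrow> 'n set \<Rightarrow> ('n \<Rightarrow> real) \<Rightarrow> (real^'n) set" where
  "Sol layer E P \<theta> T S fv = {x. (\<forall>z\<in>T. linp layer E P \<theta> z x = \<theta> (B z)) \<and> (\<forall>i\<in>S. x $ i = fv i)}"

definition cvec :: "('a::finite \<Rightarrow> nat) \<Rightarrow> ('a \<Rightarrow> 'a \<Rightarrow> bool) \<Rightarrow> 'a set \<Rightarrow> (('a, 'n::finite) param \<Rightarrow> real) \<Rightarrow> 'a \<Rightarrow> real^'n" where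
  "cvec layer E P \<theta> z = (\<chi> i. lcf (layer z - 1) E P \<theta> z i)"

definition cdd :: "('a::finite \<Rightarrow> nat) \<Rightarrow> ('a \<Rightarrow> 'a \<Rightarrow> bool) \<Rightarrow> 'a set \<Rightarrow> (('a, 'n::finite) param \<Rightarrow> real) \<Rightarrow> 'a \<Rightarrow> real" where
  "cdd layer E P \<theta> z = ldf (layer z - 1) E P \<theta> z"

lemma linp_inner: "linp layer E P \<theta> z x = cvec layer E P \<theta> z \<bullet> x + cdd layer E P \<theta> z"
  by (simp add: linp_def lin_def cvec_def cdd_def inner_vec_def)

lemma linp_hyp: "{x. linp layer E P \<theta> z x = c} = {x. cvec layer E P \<theta> z \<bullet> x = c - cdd layer E P \<theta> z}"
  by (auto simp: linp_inner)

lemma Sol_hs: "Sol layer E P \<theta> T S fv = hs ((\<lambda>z. (cvec layer E P \<theta> z, \<theta> (B z) - cdd layer E P \<theta> z)) ` T \<union> (\<lambda>i. (axis i 1, fv i)) ` S)"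
proof (intro set_eqI iffI)
  fix x assume "x \<in> Sol layer E P \<theta> T S fv" then show "x \<in> hs ((\<lambda>z. (cvec layer E P \<theta> z, \<theta> (B z) - cdd layer E P \<theta> z)) ` T \<union> (\<lambda>i. (axis i 1, fv i)) ` S)"
    by (auto simp: Sol_def hs_def linp_inner inner_axis')
next
  fix x assume a: "x \<in> hs ((\<lambda>z. (cvec layer E P \<theta> z, \<theta> (B z) - cdd layer E P \<theta> z)) ` T \<union> (\<lambda>i. (axis i 1, fv i)) ` S)"
  have "\<forall>z\<in>T. linp layer E P \<theta> z x = \<theta> (B z)"
  proof
    fix z assume "z \<in> T" then show "linp layer E P \<theta> z x = \<theta> (B z)" using a by (force simp: hs_def linp_inner)
  qed
  moreover have "\<forall>i\<in>S. x $ i = fv i"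
  proof
    fix i assume "i \<in> S" then show "x $ i = fv i" using a by (force simp: hs_def inner_axis')
  qed
  ultimately show "x \<in> Sol layer E P \<theta> T S fv" by (simp add: Sol_def)
qed

lemma affine_Sol: "affine (Sol layer E P \<theta> T (S::'n::finite set) fv)"
  unfolding Sol_hs by (rule affine_hs) simp

lemma Sol_lower:
  assumes "Sol layer E P \<theta> T (S::'n::finite set) fv \<noteq> {}"
  shows "aff_dim (Sol layer E P \<theta> T S fv) \<ge> int CARD('n) - int (card T) - int (card S)"
proof -
  let ?Q = "(\<lambda>z. (cvec layer E P \<theta> z, \<theta> (B z) - cdd layer E P \<theta> z)) ` T \<union> (\<lambda>i. (axis i 1, fv i)) ` S"
  have "card ?Q \<le> card T + card S"
    by (meson card_Un_le card_image_le finite le_trans add_mono)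
  moreover have "aff_dim (hs ?Q) \<ge> int CARD('n) - int (card ?Q)"
    using aff_dim_hs_lower[of ?Q] assms unfolding Sol_hs by simp
  ultimately show ?thesis unfolding Sol_hs by linarith
qed

lemma Sol_insert: "Sol layer E P \<theta> (insert z T) S fv = Sol layer E P \<theta> T S fv \<inter> {x. cvec layer E P \<theta> z \<bullet> x = \<theta> (B z) - cdd layer E P \<theta> z}"
  by (auto simp: Sol_def linp_inner)

lemma Sol_empty_upper:
  fixes S :: "'n::finite set"
  shows "aff_dim (Sol layer E P \<theta> {} S fv) \<le> int CARD('n) - int (card S)"
  using finite[of S]
proof (induction S rule: finite_induct)
  case empty
  have "Sol layer E P \<theta> {} {} fv = UNIV" by (auto simp: Sol_def)
  then show ?case by simp
next
  case (insert i S)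
  let ?S = "Sol layer E P \<theta> {} S fv"
  have eq: "Sol layer E P \<theta> {} (insert i S) fv = ?S \<inter> {x. axis i 1 \<bullet> x = fv i}"
    by (auto simp: Sol_def inner_axis')
  have "(\<chi> j. if j = i then fv i + 1 else fv j) \<in> ?S" using insert.hyps by (auto simp: Sol_def)
  moreover have "(\<chi> j. if j = i then fv i + 1 else fv j) \<notin> {x. axis i 1 \<bullet> x = fv i}" by (simp add: inner_axis')
  ultimately have "\<not> ?S \<subseteq> {x. axis i 1 \<bullet> x = fv i}" by blast
  then have "aff_dim (Sol layer E P \<theta> {} (insert i S) fv) \<le> aff_dim ?S - 1"
    unfolding eq using aff_dim_affine_Int_hyperplane[OF affine_Sol[of layer E P \<theta> "{}" S fv], of "axis i 1" "fv i"]
    using aff_dim_empty[of ?S] aff_dim_geq[of ?S] \<open>(\<chi> j. if j = i then fv i + 1 else fv j) \<in> ?S\<close>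
    by (auto split: if_splits)
  then show ?case using insert by simp
qed

definition fvals :: "real^'n \<Rightarrow> real \<Rightarrow> ('n \<Rightarrow> bool) \<Rightarrow> 'n \<Rightarrow> real" where
  "fvals a s up i = (if up i then a $ i + s else a $ i)"

definition GEN :: "('a::finite \<Rightarrow> nat) \<Rightarrow> ('a \<Rightarrow> 'a \<Rightarrow> bool) \<Rightarrow> real^'n::finite \<Rightarrow> real \<Rightarrow> (('a, 'n) param \<Rightarrow> real) \<Rightarrow> bool" where
  "GEN layer E a s \<theta> \<longleftrightarrow> (\<forall>P T S up. Sol layer E P \<theta> T S (fvals a s up) \<noteq> {} \<longrightarrow>
      aff_dim (Sol layer E P \<theta> T S (fvals a s up)) \<le> int CARD('n) - int (card T) - int (card S))"



lemma cube_cbox: "cube a s = cbox a (\<chi> i. a $ i + s)"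
  by (simp add: cube_def interval_cart)

lemma cube_props: "compact (cube a s)" "convex (cube a s)" "closed (cube a s)" "bounded (cube a s)"
  by (simp_all add: cube_cbox compact_cbox convex_box closed_cbox bounded_cbox)

lemma sgn_cases_real: "sgn (t::real) = 1 \<longleftrightarrow> t > 0" "sgn t = -1 \<longleftrightarrow> t < 0" "sgn t = 0 \<longleftrightarrow> t = 0"
  by (auto simp: sgn_real_def)

definition PA :: "('a \<Rightarrow> real) \<Rightarrow> 'a set" where "PA A = {z. A z = 1}"

lemma region_iff:
  assumes arch: "arch_ok layer E" and vals: "\<And>z. A z \<in> {-1,0,1}"
  shows "x \<in> region layer E A \<theta> \<longleftrightarrow> (\<forall>z. sgn (linp layer E (PA A) \<theta> z x - \<theta> (B z)) = A z)"
proof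
  assume x: "x \<in> region layer E A \<theta>"
  have H: "z' \<in> PA A \<longleftrightarrow> preact layer E \<theta> z' x > \<theta> (B z')" for z'
  proof -
    have "sgn (preact layer E \<theta> z' x - \<theta> (B z')) = A z'" using x by (simp add: region_def)
    then show ?thesis unfolding PA_def by (auto simp: sgn_real_def split: if_splits)
  qed
  show "\<forall>z. sgn (linp layer E (PA A) \<theta> z x - \<theta> (B z)) = A z"
    using x preact_linp[OF arch H] unfolding region_def by auto
next
  assume x: "\<forall>z. sgn (linp layer E (PA A) \<theta> z x - \<theta> (B z)) = A z"
  have H: "z' \<in> PA A \<longleftrightarrow> linp layer E (PA A) \<theta> z' x > \<theta> (B z')" for z'
    using x[rule_format, of z'] vals[of z'] unfolding PA_def by (auto simp: sgn_real_def split: if_splits)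
  show "x \<in> region layer E A \<theta>"
    using x preact_linp2[OF arch H] unfolding region_def by auto
qed

lemma region_preact:
  assumes arch: "arch_ok layer E" and vals: "\<And>z. A z \<in> {-1,0,1}" and x: "x \<in> region layer E A \<theta>"
  shows "preact layer E \<theta> z x = linp layer E (PA A) \<theta> z x"
proof -
  have H: "z' \<in> PA A \<longleftrightarrow> preact layer E \<theta> z' x > \<theta> (B z')" for z'
  proof -
    have "sgn (preact layer E \<theta> z' x - \<theta> (B z')) = A z'" using x by (simp add: region_def)
    then show ?thesis unfolding PA_def by (auto simp: sgn_real_def split: if_splits)
  qed
  show ?thesis using preact_linp[OF arch H] .
qed

lemma cont_pa: "continuous_on UNIV (\<lambda>x. pa k E \<theta> z x)"
proof (induction k arbitrary: z)
  case 0 then show ?case by (auto intro!: continuous_intros)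
next
  case (Suc k) then show ?case by (auto intro!: continuous_intros)
qed

lemma cont_preact: "continuous_on UNIV (\<lambda>x. preact layer E \<theta> z x)"
  by (simp add: preact_def cont_pa)

lemma cont_linp: "continuous_on UNIV (\<lambda>x. linp layer E P \<theta> z x)"
  unfolding linp_inner by (auto intro!: continuous_intros)

definition Zs :: "('a::finite \<Rightarrow> nat) \<Rightarrow> ('a \<Rightarrow> 'a \<Rightarrow> bool) \<Rightarrow> (('a, 'n::finite) param \<Rightarrow> real) \<Rightarrow> real^'n \<Rightarrow> 'a set" where
  "Zs layer E \<theta> x = {z. preact layer E \<theta> z x = \<theta> (B z)}"

lemma Vk_sub:
  fixes a :: "real^'n::finite" and \<theta> :: "('a::finite, 'n) param \<Rightarrow> real"
  assumes arch: "arch_ok layer E" and gen: "GEN layer E a s \<theta>"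
  shows "Xset layer E \<theta> k \<inter> skeleton a s k \<subseteq>
    (\<lambda>(P,T,S,up). THE x. Sol layer E P \<theta> T S (fvals a s up) = {x}) ` UNIV"
proof
  fix x assume x: "x \<in> Xset layer E \<theta> k \<inter> skeleton a s k"
  then have "x \<in> \<Union>{cube_face a s S up | S up. card S + k = CARD('n)}" by (simp add: skeleton_def)
  then obtain S up where S: "card S + k = CARD('n)" "x \<in> cube_face a s S up"
    by blast
  let ?P = "{z. preact layer E \<theta> z x > \<theta> (B z)}"
  let ?T = "Zs layer E \<theta> x"
  have cT: "card ?T = k" using x by (simp add: Xset_def Zs_def)
  have eq: "preact layer E \<theta> z x = linp layer E ?P \<theta> z x" for z
    by (rule preact_linp[OF arch]) simp
  have xin: "x \<in> Sol layer E ?P \<theta> ?T S (fvals a s up)"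
  proof -
    have "\<forall>z\<in>?T. linp layer E ?P \<theta> z x = \<theta> (B z)"
    proof
      fix z assume "z \<in> ?T"
      then have "preact layer E \<theta> z x = \<theta> (B z)" by (simp add: Zs_def)
      then show "linp layer E ?P \<theta> z x = \<theta> (B z)" by (subst eq[symmetric])
    qed
    moreover have "\<forall>i\<in>S. x $ i = fvals a s up i" using S(2) unfolding cube_face_def fvals_def by simp
    ultimately show ?thesis unfolding Sol_def by blast
  qed
  then have "aff_dim (Sol layer E ?P \<theta> ?T S (fvals a s up)) \<le> int CARD('n) - int (card ?T) - int (card S)"
  proof -
    have ne: "Sol layer E ?P \<theta> ?T S (fvals a s up) \<noteq> {}" using xin by blast
    have g: "\<And>P T S up. Sol layer E P \<theta> T S (fvals a s up) \<noteq> {} \<Longrightarrow>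
      aff_dim (Sol layer E P \<theta> T S (fvals a s up)) \<le> int CARD('n) - int (card T) - int (card S)"
      using gen unfolding GEN_def by blast
    show ?thesis by (rule g[OF ne])
  qed
  also have "\<dots> = 0" using S(1) cT by simp
  finally have "aff_dim (Sol layer E ?P \<theta> ?T S (fvals a s up)) = 0"
    using aff_dim_empty[of "Sol layer E ?P \<theta> ?T S (fvals a s up)"] aff_dim_geq[of "Sol layer E ?P \<theta> ?T S (fvals a s up)"] xin by (smt (verit) empty_iff)
  then obtain y where "Sol layer E ?P \<theta> ?T S (fvals a s up) = {y}" using aff_dim_eq_0 by blast
  then have "Sol layer E ?P \<theta> ?T S (fvals a s up) = {x}" using xin by auto
  then have "x = (\<lambda>(P,T,S,up). THE x. Sol layer E P \<theta> T S (fvals a s up) = {x}) (?P, ?T, S, up)"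
    by (simp only: prod.case) (rule the_equality[symmetric], simp_all)
  then show "x \<in> (\<lambda>(P,T,S,up). THE x. Sol layer E P \<theta> T S (fvals a s up) = {x}) ` UNIV" by (rule image_eqI) simp
qed

lemma Vk_finite:
  fixes a :: "real^'n::finite" and \<theta> :: "('a::finite, 'n) param \<Rightarrow> real"
  assumes arch: "arch_ok layer E" and gen: "GEN layer E a s \<theta>"
  shows "finite (Xset layer E \<theta> k \<inter> skeleton a s k)"
  by (rule finite_subset[OF Vk_sub[OF arch gen]]) simp



lemma convex_region:
  assumes arch: "arch_ok layer E" and vals: "\<And>z. A z \<in> {-1,0,1}"
  shows "convex (region layer E A \<theta>)"
proof -
  let ?L = "\<lambda>z y. linp layer E (PA A) \<theta> z y"
  have eq: "region layer E A \<theta> = (\<Inter>z\<in>UNIV. {y. sgn (?L z y - \<theta> (B z)) = A z})"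
    using region_iff[where A=A, OF arch vals] by blast
  have "convex {y. sgn (?L z y - \<theta> (B z)) = A z}" for z
  proof -
    have "A z = -1 \<or> A z = 0 \<or> A z = 1" using vals[of z] by auto
    then show ?thesis
    proof (elim disjE)
      assume h: "A z = -1"
      have "{y. sgn (?L z y - \<theta> (B z)) = A z} = {y. cvec layer E (PA A) \<theta> z \<bullet> y < \<theta> (B z) - cdd layer E (PA A) \<theta> z}"
        using h by (auto simp: linp_inner sgn_real_def)
      then show ?thesis by (simp add: convex_halfspace_lt)
    next
      assume h: "A z = 0"
      have "{y. sgn (?L z y - \<theta> (B z)) = A z} = {y. cvec layer E (PA A) \<theta> z \<bullet> y = \<theta> (B z) - cdd layer E (PA A) \<theta> z}"
        using h by (auto simp: linp_inner sgn_real_def)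
      then show ?thesis by (simp add: convex_hyperplane)
    next
      assume h: "A z = 1"
      have "{y. sgn (?L z y - \<theta> (B z)) = A z} = {y. cvec layer E (PA A) \<theta> z \<bullet> y > \<theta> (B z) - cdd layer E (PA A) \<theta> z}"
        using h by (auto simp: linp_inner sgn_real_def)
      then show ?thesis by (simp add: convex_halfspace_gt)
    qed
  qed
  then show ?thesis unfolding eq by (rule convex_INT)
qed

lemma exists_vertex:
  fixes a :: "real^'n::finite" and \<theta> :: "('a::finite, 'n) param \<Rightarrow> real"
  assumes arch: "arch_ok layer E" and gen: "GEN layer E a s \<theta>" and spos: "s > 0"
    and vals: "\<And>z. A z \<in> {-1,0,1}" and ne: "region layer E A \<theta> \<inter> cube a s \<noteq> {}"
  shows "\<exists>v. card (Zs layer E \<theta> v) \<le> CARD('n)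
     \<and> v \<in> Xset layer E \<theta> (card (Zs layer E \<theta> v)) \<inter> skeleton a s (card (Zs layer E \<theta> v))
     \<and> {z. A z = 0} \<subseteq> Zs layer E \<theta> v
     \<and> (\<forall>z. z \<notin> Zs layer E \<theta> v \<longrightarrow> A z = sgn (preact layer E \<theta> z v - \<theta> (B z)))"
proof -
  define R where "R = region layer E A \<theta>"
  define C where "C = cube a s"
  define K where "K = closure (R \<inter> C)"
  define L where "L = (\<lambda>z y. linp layer E (PA A) \<theta> z y)"
  define b where "b = (\<lambda>z. \<theta> (B z))"
  have Rchar: "y \<in> R \<longleftrightarrow> (\<forall>z. sgn (L z y - b z) = A z)" for y
    unfolding R_def L_def b_def by (rule region_iff[where A=A, OF arch vals])
  have contL: "continuous_on UNIV (L z)" for z unfolding L_def by (rule cont_linp)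
  have bC: "bounded C" "closed C" "convex C" unfolding C_def by (simp_all add: cube_props)
  have "compact K" unfolding K_def using bC by (simp add: bounded_Int)
  moreover have "convex K" unfolding K_def R_def using bC(3) convex_region[where A=A and \<theta>=\<theta>, OF arch vals]
    by (intro convex_closure convex_Int)
  moreover have "K \<noteq> {}" unfolding K_def R_def C_def using ne by simp
  ultimately obtain v where ext: "v extreme_point_of K" using extreme_point_exists_convex by blast
  then have vK: "v \<in> K" by (simp add: extreme_point_of_def)
  have KC: "K \<subseteq> C" unfolding K_def using bC by (meson closure_minimal inf_le2)
  have vC: "v \<in> C" using vK KC by blast
  have eqK: "preact layer E \<theta> z y = L z y" if "y \<in> K" for z y
  proof -
    have "closed {y. preact layer E \<theta> z y = L z y}"
      by (rule closed_Collect_eq[OF cont_preact contL])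
    moreover have "R \<inter> C \<subseteq> {y. preact layer E \<theta> z y = L z y}"
      unfolding R_def L_def using region_preact[where A=A, OF arch vals] by blast
    ultimately have "K \<subseteq> {y. preact layer E \<theta> z y = L z y}" unfolding K_def by (rule closure_minimal[rotated])
    then show ?thesis using that by blast
  qed
  have cb: "continuous_on UNIV (\<lambda>y::real^'n. b z)" for z by simp
  have signK0: "L z y = b z" if "y \<in> K" "A z = 0" for z y
  proof -
    have "R \<inter> C \<subseteq> {y. L z y = b z}"
    proof
      fix y assume "y \<in> R \<inter> C"
      then have "sgn (L z y - b z) = A z" using Rchar by blast
      then show "y \<in> {y. L z y = b z}" using that(2) by (auto simp: sgn_real_def split: if_splits)
    qed
    then have "K \<subseteq> {y. L z y = b z}" unfolding K_def
      by (rule closure_minimal) (rule closed_Collect_eq[OF contL cb])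
    then show ?thesis using that by blast
  qed
  have signK1: "L z y \<ge> b z" if "y \<in> K" "A z = 1" for z y
  proof -
    have "R \<inter> C \<subseteq> {y. b z \<le> L z y}"
    proof
      fix y assume "y \<in> R \<inter> C"
      then have "sgn (L z y - b z) = A z" using Rchar by blast
      then show "y \<in> {y. b z \<le> L z y}" using that(2) by (auto simp: sgn_real_def split: if_splits)
    qed
    then have "K \<subseteq> {y. b z \<le> L z y}" unfolding K_def
      by (rule closure_minimal) (rule closed_Collect_le[OF cb contL])
    then show ?thesis using that by blast
  qed
  have signKm: "L z y \<le> b z" if "y \<in> K" "A z = -1" for z y
  proof -
    have "R \<inter> C \<subseteq> {y. L z y \<le> b z}"
    proof
      fix y assume "y \<in> R \<inter> C"
      then have "sgn (L z y - b z) = A z" using Rchar by blast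
      then show "y \<in> {y. L z y \<le> b z}" using that(2) by (auto simp: sgn_real_def split: if_splits)
    qed
    then have "K \<subseteq> {y. L z y \<le> b z}" unfolding K_def
      by (rule closure_minimal) (rule closed_Collect_le[OF contL cb])
    then show ?thesis using that by blast
  qed
  define Z where "Z = Zs layer E \<theta> v"
  define Bd where "Bd = {i. v $ i = a $ i \<or> v $ i = a $ i + s}"
  define up where "up = (\<lambda>i. v $ i = a $ i + s)"
  have Zv: "z \<in> Z \<longleftrightarrow> L z v = b z" for z
    unfolding Z_def Zs_def b_def using eqK[OF vK, of z] by simp
  have zeros: "{z. A z = 0} \<subseteq> Z" using signK0[OF vK] Zv by blast
  have notZ: "sgn (L z v - b z) = A z" if "z \<notin> Z" for z
  proof -
    have ne: "L z v \<noteq> b z" using that Zv by blast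
    have "A z = -1 \<or> A z = 0 \<or> A z = 1" using vals[of z] by auto
    then show ?thesis using ne signK0[OF vK, of z] signK1[OF vK, of z] signKm[OF vK, of z]
      by (auto simp: sgn_real_def)
  qed
  have vSol: "v \<in> Sol layer E (PA A) \<theta> Z Bd (fvals a s up)"
    using Zv unfolding Sol_def L_def b_def Bd_def up_def fvals_def by auto
  have SolEq: "Sol layer E (PA A) \<theta> Z Bd (fvals a s up) = {v}"
  proof (rule ccontr)
    assume "Sol layer E (PA A) \<theta> Z Bd (fvals a s up) \<noteq> {v}"
    then obtain w where wSol: "w \<in> Sol layer E (PA A) \<theta> Z Bd (fvals a s up)" and wv: "w \<noteq> v"
      using vSol by blast
    define d where "d = w - v"
    have d0: "d \<noteq> 0" using wv unfolding d_def by simp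
    have cd0: "cvec layer E (PA A) \<theta> z \<bullet> d = 0" if "z \<in> Z" for z
    proof -
      have "L z w = b z" using wSol that unfolding Sol_def L_def b_def by blast
      moreover have "L z v = b z" using Zv that by blast
      ultimately show ?thesis unfolding d_def L_def by (simp add: linp_inner inner_diff_right)
    qed
    have dBd: "d $ i = 0" if "i \<in> Bd" for i
      using wSol vSol that unfolding Sol_def d_def by auto
    define Op where "Op = (\<Inter>z\<in>-Z. {y. sgn (L z y - b z) = A z}) \<inter> (\<Inter>i\<in>-Bd. {y. a $ i < y $ i} \<inter> {y. y $ i < a $ i + s})"
    have "open Op"
    proof -
      have "open {y. sgn (L z y - b z) = A z}" if "z \<in> -Z" for z
      proof -
        have "A z \<noteq> 0" using zeros that by blast
        then have "A z = -1 \<or> A z = 1" using vals[of z] by auto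
        then show ?thesis
        proof
          assume h: "A z = -1"
          have "{y. sgn (L z y - b z) = A z} = {y. L z y < b z}" using h by (auto simp: sgn_real_def)
          then show ?thesis using open_Collect_less[OF contL cb] by simp
        next
          assume h: "A z = 1"
          have "{y. sgn (L z y - b z) = A z} = {y. b z < L z y}" using h by (auto simp: sgn_real_def)
          then show ?thesis using open_Collect_less[OF cb contL] by simp
        qed
      qed
      moreover have "open ({y::real^'n. a $ i < y $ i} \<inter> {y. y $ i < a $ i + s})" for i
        by (intro open_Int open_Collect_less continuous_intros)
      ultimately show ?thesis unfolding Op_def by (intro open_Int open_INT) auto
    qed
    have vO: "v \<in> Op"
    proof -
      have "v \<in> {y. a $ i < y $ i} \<inter> {y. y $ i < a $ i + s}" if "i \<in> -Bd" for i
      proof -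
        have "a $ i \<le> v $ i" "v $ i \<le> a $ i + s" using vC unfolding C_def cube_def by auto
        moreover have "v $ i \<noteq> a $ i" "v $ i \<noteq> a $ i + s" using that unfolding Bd_def by auto
        ultimately show ?thesis by auto
      qed
      then show ?thesis unfolding Op_def using notZ by auto
    qed
    obtain \<rho> where rho: "\<rho> > 0" "ball v \<rho> \<subseteq> Op" using \<open>open Op\<close> vO open_contains_ball by blast
    define \<epsilon> where "\<epsilon> = \<rho> / (2 * norm d)"
    have eps: "\<epsilon> > 0" using rho d0 unfolding \<epsilon>_def by simp
    have epsd: "\<epsilon> * norm d = \<rho> / 2" using d0 unfolding \<epsilon>_def by simp
    have inK: "v + \<tau> *\<^sub>R d \<in> K" if tau: "\<bar>\<tau>\<bar> \<le> \<epsilon>" for \<tau>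
      unfolding K_def closure_approachable
    proof (intro allI impI)
      fix e :: real assume e: "e > 0"
      have me: "min e (\<rho>/2) > 0" using e rho by simp
      obtain u0 where u0: "u0 \<in> R \<inter> C" "dist u0 v < min e (\<rho>/2)"
        using vK me unfolding K_def closure_approachable by blast
      define u where "u = u0 + \<tau> *\<^sub>R d"
      have du: "dist u (v + \<tau> *\<^sub>R d) < e" using u0 unfolding u_def by simp
      have "\<bar>\<tau>\<bar> * norm d \<le> \<epsilon> * norm d" using tau by (simp add: mult_right_mono)
      then have "norm (\<tau> *\<^sub>R d) \<le> \<rho> / 2" using epsd by simp
      moreover have "dist u0 u = norm (\<tau> *\<^sub>R d)" by (simp add: u_def dist_norm)
      moreover have "dist v u \<le> dist v u0 + dist u0 u" by (rule dist_triangle)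
      moreover have "dist v u0 = dist u0 v" by (rule dist_commute)
      ultimately have "dist v u < \<rho>" using u0(2) by linarith
      then have uO: "u \<in> Op" using rho by auto
      have uR: "u \<in> R"
        unfolding Rchar
      proof
        fix z show "sgn (L z u - b z) = A z"
        proof (cases "z \<in> Z")
          case True
          have "L z u = L z u0" unfolding u_def L_def
            using cd0[OF True] by (simp add: linp_inner inner_add_right)
          then show ?thesis using u0(1) Rchar by auto
        next
          case False then show ?thesis using uO unfolding Op_def by auto
        qed
      qed
      have uC: "u \<in> C"
        unfolding C_def cube_def mem_Collect_eq
      proof (intro allI)
        fix i show "a $ i \<le> u $ i \<and> u $ i \<le> a $ i + s"
        proof (cases "i \<in> Bd")
          case True
          then show ?thesis using dBd[OF True] u0(1) unfolding u_def C_def cube_def by auto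
        next
          case False
          then have "a $ i < u $ i \<and> u $ i < a $ i + s" using uO unfolding Op_def by auto
          then show ?thesis by auto
        qed
      qed
      show "\<exists>y\<in>R \<inter> C. dist y (v + \<tau> *\<^sub>R d) < e" using uR uC du by blast
    qed
    have p1: "v + \<epsilon> *\<^sub>R d \<in> K" using inK eps by simp
    have p2: "v + (-\<epsilon>) *\<^sub>R d \<in> K" using inK[of "-\<epsilon>"] eps by simp
    have neq: "v + (-\<epsilon>) *\<^sub>R d \<noteq> v + \<epsilon> *\<^sub>R d"
    proof
      assume "v + (-\<epsilon>) *\<^sub>R d = v + \<epsilon> *\<^sub>R d"
      then have "(-\<epsilon>) *\<^sub>R d = \<epsilon> *\<^sub>R d" by simp
      then have "-\<epsilon> = \<epsilon> \<or> d = 0" by (simp only: scaleR_cancel_right)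
      then show False using eps d0 by auto
    qed
    have mp: "midpoint (v + (-\<epsilon>) *\<^sub>R d) (v + \<epsilon> *\<^sub>R d) = v"
      by (simp add: midpoint_eq_iff)
    have "v \<in> open_segment (v + (-\<epsilon>) *\<^sub>R d) (v + \<epsilon> *\<^sub>R d)"
      using midpoint_in_open_segment[of "v + (-\<epsilon>) *\<^sub>R d" "v + \<epsilon> *\<^sub>R d"] neq unfolding mp by simp
    then show False using ext p1 p2 unfolding extreme_point_of_def by blast
  qed
  have ad0: "aff_dim (Sol layer E (PA A) \<theta> Z Bd (fvals a s up)) = 0" unfolding SolEq by simp
  have "aff_dim (Sol layer E (PA A) \<theta> Z Bd (fvals a s up)) \<le> int CARD('n) - int (card Z) - int (card Bd)"
    using gen vSol unfolding GEN_def by blast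
  moreover have "aff_dim (Sol layer E (PA A) \<theta> Z Bd (fvals a s up)) \<ge> int CARD('n) - int (card Z) - int (card Bd)"
    using Sol_lower vSol by blast
  ultimately have cards: "card Bd + card Z = CARD('n)" using ad0 by linarith
  have "v \<in> cube_face a s Bd up"
    using vC spos unfolding C_def cube_face_def Bd_def up_def by auto
  then have "v \<in> skeleton a s (card Z)" unfolding skeleton_def using cards by blast
  moreover have "v \<in> Xset layer E \<theta> (card Z)" unfolding Xset_def Z_def Zs_def by simp
  moreover have "\<forall>z. z \<notin> Z \<longrightarrow> A z = sgn (preact layer E \<theta> z v - \<theta> (B z))"
    using notZ eqK[OF vK] unfolding b_def by simp
  ultimately show ?thesis using cards zeros unfolding Z_def by (intro exI[of _ v]) auto
qed



lemma card_pairs: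
  assumes "finite K"
  shows "card (SIGMA Z0:{Z0. Z0 \<subseteq> K \<and> card Z0 = r}. Pow (K - Z0)) = (card K choose r) * 2 ^ (card K - r)"
proof -
  have "{Z0. Z0 \<subseteq> K \<and> card Z0 = r} \<subseteq> Pow K" by auto
  then have fin: "finite {Z0. Z0 \<subseteq> K \<and> card Z0 = r}" using assms by (simp add: finite_subset)
  have "card (SIGMA Z0:{Z0. Z0 \<subseteq> K \<and> card Z0 = r}. Pow (K - Z0)) = (\<Sum>Z0\<in>{Z0. Z0 \<subseteq> K \<and> card Z0 = r}. card (Pow (K - Z0)))"
    using fin assms by (intro card_SigmaI) auto
  also have "\<dots> = (\<Sum>Z0\<in>{Z0. Z0 \<subseteq> K \<and> card Z0 = r}. 2 ^ (card K - r))"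
  proof (rule sum.cong)
    fix Z0 assume "Z0 \<in> {Z0. Z0 \<subseteq> K \<and> card Z0 = r}"
    then have z: "Z0 \<subseteq> K" "card Z0 = r" by auto
    have fz: "finite Z0" using finite_subset[OF z(1) assms] .
    have "card (K - Z0) = card K - r" using card_Diff_subset[OF fz z(1)] z(2) by simp
    moreover have "finite (K - Z0)" using assms by simp
    ultimately show "card (Pow (K - Z0)) = 2 ^ (card K - r)" by (simp add: card_Pow)
  qed simp
  also have "\<dots> = (card K choose r) * 2 ^ (card K - r)" using n_subsets[OF assms, of r] by simp
  finally show ?thesis .
qed

lemma ecard_fin: "finite X \<Longrightarrow> ecard X = of_nat (card X)"
  by (simp add: ecard_def of_nat_eq_enat)

lemma det_main:
  fixes a :: "real^'n::finite" and \<theta> :: "('a::finite, 'n) param \<Rightarrow> real"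
  assumes arch: "arch_ok layer E" and gen: "GEN layer E a s \<theta>" and spos: "s > 0"
  shows "(\<forall>k \<le> CARD('n). \<forall>x \<in> Xset layer E \<theta> k \<inter> skeleton a s k.
         \<not> x islimpt (Xset layer E \<theta> k \<inter> skeleton a s k))
   \<and> ecard {region layer E A \<theta> | A. partial_pattern r A \<and> region layer E A \<theta> \<inter> cube a s \<noteq> {}}
       \<le> (\<Sum>k = r..CARD('n). of_nat ((k choose r) * 2 ^ (k - r)) * ecard (Xset layer E \<theta> k \<inter> skeleton a s k))"
proof
  define V where "V = (\<lambda>k. Xset layer E \<theta> k \<inter> skeleton a s k)"
  have finV: "finite (V k)" for k unfolding V_def by (rule Vk_finite[OF arch gen])
  show "\<forall>k \<le> CARD('n). \<forall>x \<in> Xset layer E \<theta> k \<inter> skeleton a s k.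
         \<not> x islimpt (Xset layer E \<theta> k \<inter> skeleton a s k)"
    using finV islimpt_finite unfolding V_def by blast
  define n where "n = CARD('n)"
  define Pats where "Pats = {A. partial_pattern r A \<and> region layer E A \<theta> \<inter> cube a s \<noteq> {}}"
  have Regs: "{region layer E A \<theta> | A. partial_pattern r A \<and> region layer E A \<theta> \<inter> cube a s \<noteq> {}} = (\<lambda>A. region layer E A \<theta>) ` Pats"
    unfolding Pats_def by blast
  have "Pats \<subseteq> Pi UNIV (\<lambda>_. {-1,0,1})" unfolding Pats_def partial_pattern_def by auto
  moreover have "finite (Pi UNIV (\<lambda>_. {-1::real,0,1}) :: ('a \<Rightarrow> real) set)"
    using finite_PiE[OF finite[of "UNIV::'a set"], of "\<lambda>_. {-1::real,0,1}"] by (simp add: PiE_UNIV_domain)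
  ultimately have finP: "finite Pats" by (rule finite_subset)
  define good where "good = (\<lambda>A v. card (Zs layer E \<theta> v) \<le> CARD('n)
     \<and> v \<in> Xset layer E \<theta> (card (Zs layer E \<theta> v)) \<inter> skeleton a s (card (Zs layer E \<theta> v))
     \<and> {z. A z = 0} \<subseteq> Zs layer E \<theta> v
     \<and> (\<forall>z. z \<notin> Zs layer E \<theta> v \<longrightarrow> A z = sgn (preact layer E \<theta> z v - \<theta> (B z))))"
  define vA where "vA = (\<lambda>A. SOME v. good A v)"
  have vA: "good A (vA A)" if "A \<in> Pats" for A
  proof -
    have "\<exists>v. good A v" unfolding good_def
      using that unfolding Pats_def partial_pattern_def by (intro exists_vertex[OF arch gen spos]) auto
    then show ?thesis unfolding vA_def by (rule someI_ex)
  qed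
  define Pairs where "Pairs = (\<lambda>K::'a set. SIGMA Z0:{Z0. Z0 \<subseteq> K \<and> card Z0 = r}. Pow (K - Z0))"
  define U where "U = (\<Union>k\<in>{r..n}. V k)"
  define Tgt where "Tgt = (SIGMA v:U. Pairs (Zs layer E \<theta> v))"
  define \<phi> where "\<phi> = (\<lambda>A. (vA A, ({z. A z = 0}, {z \<in> Zs layer E \<theta> (vA A). A z = 1})))"
  have finU: "finite U" unfolding U_def using finV by auto
  have finT: "finite Tgt" unfolding Tgt_def Pairs_def using finU by (intro finite_SigmaI) auto
  have cardZ: "card (Zs layer E \<theta> v) = k" if "v \<in> V k" for v k
    using that unfolding V_def Xset_def Zs_def by simp
  have "\<phi> ` Pats \<subseteq> Tgt"
  proof
    fix y assume "y \<in> \<phi> ` Pats"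
    then obtain A where A: "A \<in> Pats" and y: "y = \<phi> A" by blast
    let ?v = "vA A" let ?k = "card (Zs layer E \<theta> ?v)"
    have g: "good A ?v" using vA[OF A] .
    have cr: "card {z. A z = 0} = r" using A unfolding Pats_def partial_pattern_def by simp
    have sub: "{z. A z = 0} \<subseteq> Zs layer E \<theta> ?v" using g unfolding good_def by blast
    have "r \<le> ?k" using card_mono[OF finite sub] cr by simp
    moreover have "?k \<le> n" using g unfolding good_def n_def by blast
    moreover have "?v \<in> V ?k" using g unfolding good_def V_def by blast
    ultimately have "?v \<in> U" unfolding U_def by auto
    moreover have "({z. A z = 0}, {z \<in> Zs layer E \<theta> ?v. A z = 1}) \<in> Pairs (Zs layer E \<theta> ?v)"
      unfolding Pairs_def using sub cr by auto
    ultimately show "y \<in> Tgt" unfolding Tgt_def y \<phi>_def by blast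
  qed
  moreover have "inj_on \<phi> Pats"
  proof (rule inj_onI)
    fix A A' assume A: "A \<in> Pats" and A': "A' \<in> Pats" and eq: "\<phi> A = \<phi> A'"
    have v: "vA A = vA A'" using eq unfolding \<phi>_def by simp
    have z0: "{z. A z = 0} = {z. A' z = 0}" using eq unfolding \<phi>_def by simp
    have z1: "{z \<in> Zs layer E \<theta> (vA A). A z = 1} = {z \<in> Zs layer E \<theta> (vA A). A' z = 1}"
      using eq v unfolding \<phi>_def by simp
    have valsA: "A z \<in> {-1,0,1}" "A' z \<in> {-1,0,1}" for z
      using A A' unfolding Pats_def partial_pattern_def by auto
    show "A = A'"
    proof
      fix z show "A z = A' z"
      proof (cases "z \<in> Zs layer E \<theta> (vA A)")
        case True
        have "A z = 0 \<longleftrightarrow> A' z = 0" using z0 by blast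
        moreover have "A z = 1 \<longleftrightarrow> A' z = 1" using z1 True by blast
        ultimately show ?thesis using valsA[of z] by auto
      next
        case False
        then show ?thesis using vA[OF A] vA[OF A'] v unfolding good_def by metis
      qed
    qed
  qed
  ultimately have c1: "card Pats \<le> card Tgt" using finT by (intro card_inj_on_le) auto
  have disj: "V k \<inter> V k' = {}" if "k \<noteq> k'" for k k' using that unfolding V_def Xset_def by auto
  have "card Tgt = (\<Sum>v\<in>U. card (Pairs (Zs layer E \<theta> v)))"
    unfolding Tgt_def Pairs_def using finU by (intro card_SigmaI) auto
  also have "\<dots> = (\<Sum>k\<in>{r..n}. \<Sum>v\<in>V k. card (Pairs (Zs layer E \<theta> v)))"
    unfolding U_def by (rule sum.UNION_disjoint) (auto simp: finV disj)
  also have "\<dots> = (\<Sum>k\<in>{r..n}. \<Sum>v\<in>V k. (k choose r) * 2 ^ (k - r))"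
  proof (intro sum.cong refl)
    fix k v assume "v \<in> V k"
    then show "card (Pairs (Zs layer E \<theta> v)) = (k choose r) * 2 ^ (k - r)"
      unfolding Pairs_def using card_pairs[of "Zs layer E \<theta> v" r] cardZ by simp
  qed
  also have "\<dots> = (\<Sum>k\<in>{r..n}. (k choose r) * 2 ^ (k - r) * card (V k))" by (simp add: mult.commute)
  finally have c2: "card Tgt = (\<Sum>k\<in>{r..n}. (k choose r) * 2 ^ (k - r) * card (V k))" .
  have "ecard ((\<lambda>A. region layer E A \<theta>) ` Pats) = of_nat (card ((\<lambda>A. region layer E A \<theta>) ` Pats))"
    using finP by (simp add: ecard_fin)
  also have "\<dots> \<le> of_nat (card Pats)" using card_image_le[OF finP] by (simp add: of_nat_eq_enat)
  also have "\<dots> \<le> of_nat (card Tgt)" using c1 by (simp add: of_nat_eq_enat)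
  also have "\<dots> = (\<Sum>k = r..CARD('n). of_nat ((k choose r) * 2 ^ (k - r)) * ecard (V k))"
    unfolding c2 n_def by (simp add: ecard_fin finV)
  finally show "ecard {region layer E A \<theta> | A. partial_pattern r A \<and> region layer E A \<theta> \<inter> cube a s \<noteq> {}}
       \<le> (\<Sum>k = r..CARD('n). of_nat ((k choose r) * 2 ^ (k - r)) * ecard (Xset layer E \<theta> k \<inter> skeleton a s k))"
    unfolding Regs V_def .
qed



lemma exists_zero_meas:
  fixes H :: "'p \<Rightarrow> real^'n::finite \<Rightarrow> real"
  assumes meas: "\<And>x. (\<lambda>\<theta>. H \<theta> x) \<in> borel_measurable M"
    and cont: "\<And>\<theta>. continuous_on UNIV (H \<theta>)"
    and nn: "\<And>\<theta> x. 0 \<le> H \<theta> x"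
  shows "{\<theta> \<in> space M. \<exists>x. H \<theta> x = 0} \<in> sets M"
proof -
  obtain D :: "(real^'n) set" where D: "countable D" "\<And>X. open X \<Longrightarrow> X \<noteq> {} \<Longrightarrow> \<exists>d\<in>D. d \<in> X"
    by (rule countable_dense_setE) blast
  define Dm where "Dm = (\<lambda>m::nat. D \<inter> cball 0 (real m + 1))"
  have cDm: "countable (Dm m)" for m unfolding Dm_def using D(1) by simp
  have eq: "{\<theta> \<in> space M. \<exists>x. H \<theta> x = 0} =
    (\<Union>m. \<Inter>j. \<Union>q\<in>Dm m. {\<theta> \<in> space M. H \<theta> q < 1 / real (Suc j)})"
  proof (intro set_eqI iffI)
    fix \<theta> assume "\<theta> \<in> {\<theta> \<in> space M. \<exists>x. H \<theta> x = 0}"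
    then obtain x where sp: "\<theta> \<in> space M" and x: "H \<theta> x = 0" by blast
    obtain m :: nat where m: "norm x \<le> real m" using real_arch_simple by blast
    have "\<theta> \<in> (\<Union>q\<in>Dm m. {\<theta> \<in> space M. H \<theta> q < 1 / real (Suc j)})" for j
    proof -
      have "isCont (H \<theta>) x" using cont[of \<theta>] by (simp add: continuous_on_eq_continuous_at)
      then obtain \<delta> where \<delta>: "\<delta> > 0" "\<And>y. dist y x < \<delta> \<Longrightarrow> dist (H \<theta> y) (H \<theta> x) < 1 / real (Suc j)"
        unfolding continuous_at_eps_delta by (metis of_nat_0_less_iff zero_less_Suc zero_less_divide_1_iff)
      have "open (ball x (min \<delta> 1))" "ball x (min \<delta> 1) \<noteq> {}" using \<delta>(1) by auto
      then obtain q where q: "q \<in> D" "q \<in> ball x (min \<delta> 1)" using D(2) by blast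
      have "norm q \<le> real m + 1" using q(2) m norm_triangle_ineq2[of q x]
        by (auto simp: dist_norm norm_minus_commute)
      then have "q \<in> Dm m" unfolding Dm_def using q(1) by simp
      moreover have "H \<theta> q < 1 / real (Suc j)" using \<delta>(2)[of q] q(2) x by (simp add: dist_commute dist_real_def)
      ultimately show ?thesis using sp by blast
    qed
    then show "\<theta> \<in> (\<Union>m. \<Inter>j. \<Union>q\<in>Dm m. {\<theta> \<in> space M. H \<theta> q < 1 / real (Suc j)})" by blast
  next
    fix \<theta> assume "\<theta> \<in> (\<Union>m. \<Inter>j. \<Union>q\<in>Dm m. {\<theta> \<in> space M. H \<theta> q < 1 / real (Suc j)})"
    then have "\<exists>m. \<forall>j. \<exists>q\<in>Dm m. \<theta> \<in> space M \<and> H \<theta> q < 1 / real (Suc j)" by simp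
    then obtain m where hm: "\<And>j. \<exists>q\<in>Dm m. \<theta> \<in> space M \<and> H \<theta> q < 1 / real (Suc j)" by blast
    have sp: "\<theta> \<in> space M" using hm[of 0] by blast
    obtain q where q: "\<And>j. q j \<in> Dm m \<and> H \<theta> (q j) < 1 / real (Suc j)"
      using hm by metis
    have "seq_compact (cball (0::real^'n) (real m + 1))"
      by (rule compact_imp_seq_compact) simp
    moreover have "\<forall>j. q j \<in> cball 0 (real m + 1)" using q unfolding Dm_def by blast
    ultimately obtain l r where lr: "strict_mono r" "(q \<circ> r) \<longlonglongrightarrow> l" by (rule seq_compactE)
    have t1: "(\<lambda>j. H \<theta> ((q \<circ> r) j)) \<longlonglongrightarrow> H \<theta> l"
      using cont[of \<theta>] lr(2) by (rule continuous_on_tendsto_compose[where s=UNIV]) auto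
    have t2: "(\<lambda>j. H \<theta> ((q \<circ> r) j)) \<longlonglongrightarrow> 0"
    proof (rule tendsto_sandwich[of "\<lambda>_. 0" _ _ "\<lambda>j. 1 / real (Suc j)"])
      show "\<forall>\<^sub>F n in sequentially. 0 \<le> H \<theta> ((q \<circ> r) n)" using nn by simp
      have "H \<theta> ((q \<circ> r) n) \<le> 1 / real (Suc n)" for n
      proof -
        have "n \<le> r n" using seq_suble[OF lr(1)] .
        then have "1 / real (Suc (r n)) \<le> 1 / real (Suc n)" by (simp add: frac_le)
        then show ?thesis using q[of "r n"] by simp
      qed
      then show "\<forall>\<^sub>F n in sequentially. H \<theta> ((q \<circ> r) n) \<le> 1 / real (Suc n)" by simp
      show "(\<lambda>n. 0::real) \<longlonglongrightarrow> 0" by simp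
      show "(\<lambda>n. 1 / real (Suc n)) \<longlonglongrightarrow> 0" using LIMSEQ_inverse_real_of_nat by (simp add: inverse_eq_divide)
    qed
    have "H \<theta> l = 0" using tendsto_unique[OF _ t1 t2] by simp
    then show "\<theta> \<in> {\<theta> \<in> space M. \<exists>x. H \<theta> x = 0}" using sp by blast
  qed
  have base: "{\<theta> \<in> space M. H \<theta> q < c} \<in> sets M" for q c
  proof -
    have [measurable]: "(\<lambda>\<theta>. H \<theta> q) \<in> borel_measurable M" by (rule meas)
    show ?thesis by measurable
  qed
  show ?thesis unfolding eq
  proof (rule sets.countable_UN'')
    show "countable (UNIV::nat set)" by simp
    fix m :: nat
    show "(\<Inter>j. \<Union>q\<in>Dm m. {\<theta> \<in> space M. H \<theta> q < 1 / real (Suc j)}) \<in> sets M"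
    proof (rule sets.countable_INT)
      show "(\<lambda>j. \<Union>q\<in>Dm m. {\<theta> \<in> space M. H \<theta> q < 1 / real (Suc j)}) ` UNIV \<subseteq> sets M"
      proof (rule image_subsetI)
        fix j :: nat
        show "(\<Union>q\<in>Dm m. {\<theta> \<in> space M. H \<theta> q < 1 / real (Suc j)}) \<in> sets M"
          by (rule sets.countable_UN''[OF cDm base])
      qed
    qed simp
  qed
qed



lemma comp_meas: "(\<lambda>\<theta>. \<theta> p) \<in> borel_measurable (PiM I (\<lambda>_. lborel))"
proof (cases "p \<in> I")
  case True
  then show ?thesis using measurable_component_singleton[OF True, of "\<lambda>_. lborel"] by simp
next
  case False
  have "\<theta> p = undefined" if "\<theta> \<in> space (PiM I (\<lambda>_. lborel))" for \<theta>
    using that False by (auto simp: space_PiM PiE_def extensional_def)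
  then show ?thesis by (subst measurable_cong[where g="\<lambda>_. undefined"]) auto
qed

lemma meas_lcf: "(\<lambda>\<theta>. lcf k E P \<theta> z i) \<in> borel_measurable (PiM I (\<lambda>_. lborel))"
proof (induction k arbitrary: z)
  case 0 then show ?case by (simp add: comp_meas)
next
  case (Suc k)
  show ?case unfolding lcf.simps
  proof (rule borel_measurable_sum)
    fix z' show "(\<lambda>\<theta>. if z' \<in> P then \<theta> (W z z') * lcf k E P \<theta> z' i else 0) \<in> borel_measurable (PiM I (\<lambda>_. lborel))"
      by (cases "z' \<in> P") (simp_all add: borel_measurable_times comp_meas Suc.IH)
  qed
qed

lemma meas_ldf: "(\<lambda>\<theta>. ldf k E P \<theta> z) \<in> borel_measurable (PiM I (\<lambda>_. lborel))"
proof (induction k arbitrary: z)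
  case 0 then show ?case by simp
next
  case (Suc k)
  show ?case unfolding ldf.simps
  proof (rule borel_measurable_sum)
    fix z' show "(\<lambda>\<theta>. if z' \<in> P then \<theta> (W z z') * (ldf k E P \<theta> z' - \<theta> (B z')) else 0) \<in> borel_measurable (PiM I (\<lambda>_. lborel))"
      by (cases "z' \<in> P") (simp_all add: borel_measurable_times borel_measurable_diff comp_meas Suc.IH)
  qed
qed

lemma meas_linp: "(\<lambda>\<theta>. linp layer E P \<theta> z x) \<in> borel_measurable (PiM I (\<lambda>_. lborel))"
  unfolding linp_def lin_def
  by (intro borel_measurable_add borel_measurable_sum borel_measurable_times meas_lcf meas_ldf borel_measurable_const)

lemma lcf_upd: "lcf k E P (\<theta>(B z0 := y)) z i = lcf k E P \<theta> z i"
proof (induction k arbitrary: z)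
  case 0 then show ?case by simp
next
  case (Suc k)
  show ?case unfolding lcf.simps
  proof (rule sum.cong)
    fix z'
    have e: "(\<theta>(B z0 := y)) (W z z') = \<theta> (W z z')" by simp
    show "(if z' \<in> P then (\<theta>(B z0 := y)) (W z z') * lcf k E P (\<theta>(B z0 := y)) z' i else 0)
      = (if z' \<in> P then \<theta> (W z z') * lcf k E P \<theta> z' i else 0)"
      by (simp only: e Suc.IH)
  qed simp
qed

lemma ldf_upd:
  assumes arch: "arch_ok layer E"
  shows "layer z = Suc k \<Longrightarrow> layer z \<le> layer z0 \<Longrightarrow> ldf k E P (\<theta>(B z0 := y)) z = ldf k E P \<theta> z"
proof (induction k arbitrary: z)
  case 0 then show ?case by simp
next
  case (Suc k)
  show ?case unfolding ldf.simps
  proof (rule sum.cong)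
    fix z' assume "z' \<in> {z'. E z' z}"
    then have l: "layer z' = Suc k" using arch Suc.prems by (auto simp: arch_ok_def)
    then have "z' \<noteq> z0" using Suc.prems by auto
    then show "(if z' \<in> P then (\<theta>(B z0 := y)) (W z z') * (ldf k E P (\<theta>(B z0 := y)) z' - (\<theta>(B z0 := y)) (B z')) else 0)
      = (if z' \<in> P then \<theta> (W z z') * (ldf k E P \<theta> z' - \<theta> (B z')) else 0)"
      using Suc.IH[OF l] l Suc.prems \<open>z' \<noteq> z0\<close> by (simp del: fun_upd_apply add: fun_upd_other)
  qed simp
qed

lemma linp_upd:
  assumes arch: "arch_ok layer E" and le: "layer z \<le> layer z0"
  shows "linp layer E P (\<theta>(B z0 := y)) z x = linp layer E P \<theta> z x"
proof -
  have "layer z = Suc (layer z - 1)" using arch by (auto simp: arch_ok_def) (metis One_nat_def Suc_pred less_eq_Suc_le)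
  then show ?thesis using ldf_upd[OF arch, of z "layer z - 1" z0 P \<theta> y] le
    by (simp add: linp_def lin_def lcf_upd)
qed

lemma finite_params: "finite (params layer E :: ('a::finite, 'n::finite) param set)"
proof -
  have "params layer E \<subseteq> (\<lambda>(z,i). WIn z i) ` UNIV \<union> (\<lambda>(z,z'). W z z') ` UNIV \<union> range B"
    unfolding params_def by auto
  moreover have "finite ((\<lambda>(z::'a,i::'n). WIn z i) ` UNIV \<union> (\<lambda>(z::'a,z'::'a). W z z') ` UNIV \<union> range (B :: 'a \<Rightarrow> ('a,'n) param))"
    by simp
  ultimately show ?thesis by (rule finite_subset)
qed



definition Nset :: "('a::finite \<Rightarrow> nat) \<Rightarrow> ('a \<Rightarrow> 'a \<Rightarrow> bool) \<Rightarrow> 'a set \<Rightarrow> 'a set \<Rightarrow> 'n::finite set \<Rightarrow> ('n \<Rightarrow> real) \<Rightarrow> 'a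
   \<Rightarrow> (('a, 'n) param \<Rightarrow> real) set" where
  "Nset layer E P T S fv z0 = {\<theta> \<in> space (PiM (params layer E) (\<lambda>_. lborel)).
     Sol layer E P \<theta> T S fv \<noteq> {} \<and> (\<forall>x\<in>Sol layer E P \<theta> T S fv. linp layer E P \<theta> z0 x = \<theta> (B z0))}"

lemma Nset_sets:
  fixes layer :: "'a::finite \<Rightarrow> nat" and S :: "'n::finite set"
  shows "Nset layer E P T S fv z0 \<in> sets (PiM (params layer E) (\<lambda>_. lborel))"
proof -
  let ?M = "PiM (params layer E) (\<lambda>_. lborel) :: (('a, 'n) param \<Rightarrow> real) measure"
  define F where "F = (\<lambda>(\<theta>::('a, 'n) param \<Rightarrow> real) (x::real^'n). (\<Sum>z\<in>T. \<bar>linp layer E P \<theta> z x - \<theta> (B z)\<bar>) + (\<Sum>i\<in>S. \<bar>x $ i - fv i\<bar>))"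
  define G where "G = (\<lambda>(\<theta>::('a, 'n) param \<Rightarrow> real) (x::real^'n). linp layer E P \<theta> z0 x - \<theta> (B z0))"
  define Hm where "Hm = (\<lambda>m \<theta> x. F \<theta> x + max 0 (1 / real (Suc m) - \<bar>G \<theta> x\<bar>))"
  have Fnn: "0 \<le> F \<theta> x" for \<theta> x unfolding F_def by (intro add_nonneg_nonneg sum_nonneg) auto
  have Fz: "F \<theta> x = 0 \<longleftrightarrow> x \<in> Sol layer E P \<theta> T S fv" for \<theta> x
  proof -
    have "F \<theta> x = 0 \<longleftrightarrow> (\<Sum>z\<in>T. \<bar>linp layer E P \<theta> z x - \<theta> (B z)\<bar>) = 0 \<and> (\<Sum>i\<in>S. \<bar>x $ i - fv i\<bar>) = 0"
      unfolding F_def by (intro add_nonneg_eq_0_iff sum_nonneg) auto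
    also have "\<dots> \<longleftrightarrow> (\<forall>z\<in>T. linp layer E P \<theta> z x = \<theta> (B z)) \<and> (\<forall>i\<in>S. x $ i = fv i)"
      by (simp add: sum_nonneg_eq_0_iff)
    finally show ?thesis by (simp add: Sol_def)
  qed
  have Hz: "(\<exists>m x. Hm m \<theta> x = 0) \<longleftrightarrow> (\<exists>x\<in>Sol layer E P \<theta> T S fv. linp layer E P \<theta> z0 x \<noteq> \<theta> (B z0))" for \<theta>
  proof
    assume "\<exists>m x. Hm m \<theta> x = 0"
    then obtain m x where h: "Hm m \<theta> x = 0" by blast
    have "F \<theta> x = 0" "max 0 (1 / real (Suc m) - \<bar>G \<theta> x\<bar>) = 0"
      using h Fnn[of \<theta> x] unfolding Hm_def by (smt (verit) max.cobounded1)+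
    then show "\<exists>x\<in>Sol layer E P \<theta> T S fv. linp layer E P \<theta> z0 x \<noteq> \<theta> (B z0)"
      using Fz unfolding G_def by (intro bexI[of _ x]) (auto simp: max_def split: if_splits)
  next
    assume "\<exists>x\<in>Sol layer E P \<theta> T S fv. linp layer E P \<theta> z0 x \<noteq> \<theta> (B z0)"
    then obtain x where x: "x \<in> Sol layer E P \<theta> T S fv" "G \<theta> x \<noteq> 0" unfolding G_def by auto
    then obtain m where m: "inverse (of_nat (Suc m)) < \<bar>G \<theta> x\<bar>" using reals_Archimedean[of "\<bar>G \<theta> x\<bar>"] by auto
    have "Hm m \<theta> x = 0" unfolding Hm_def using Fz[of \<theta> x] x m by (simp add: inverse_eq_divide)
    then show "\<exists>m x. Hm m \<theta> x = 0" by blast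
  qed
  have measF: "(\<lambda>\<theta>. F \<theta> x) \<in> borel_measurable ?M" for x
    unfolding F_def
    by (intro borel_measurable_add borel_measurable_sum borel_measurable_abs borel_measurable_diff meas_linp comp_meas borel_measurable_const)
  have measH: "(\<lambda>\<theta>. Hm m \<theta> x) \<in> borel_measurable ?M" for m x
    unfolding Hm_def G_def
    by (intro borel_measurable_add measF borel_measurable_max borel_measurable_abs borel_measurable_diff meas_linp comp_meas borel_measurable_const)
  have contF: "continuous_on UNIV (F \<theta>)" for \<theta>
    unfolding F_def linp_inner by (auto intro!: continuous_intros)
  have contH: "continuous_on UNIV (Hm m \<theta>)" for m \<theta>
    unfolding Hm_def by (rule continuous_on_add[OF contF]) (unfold G_def linp_inner, auto intro!: continuous_intros)
  have Hnn: "0 \<le> Hm m \<theta> x" for m \<theta> x unfolding Hm_def using Fnn[of \<theta> x] by simp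
  have s1: "{\<theta> \<in> space ?M. \<exists>x. F \<theta> x = 0} \<in> sets ?M"
    by (rule exists_zero_meas[OF measF contF Fnn])
  have s2: "(\<Union>m. {\<theta> \<in> space ?M. \<exists>x. Hm m \<theta> x = 0}) \<in> sets ?M"
    using exists_zero_meas[OF measH contH Hnn] by blast
  have "Nset layer E P T S fv z0 = {\<theta> \<in> space ?M. \<exists>x. F \<theta> x = 0} - (\<Union>m. {\<theta> \<in> space ?M. \<exists>x. Hm m \<theta> x = 0})"
  proof (rule set_eqI)
    fix \<theta>
    have e1: "(\<exists>x. F \<theta> x = 0) \<longleftrightarrow> Sol layer E P \<theta> T S fv \<noteq> {}" using Fz by auto
    have e2: "(\<exists>m x. Hm m \<theta> x = 0) \<longleftrightarrow> \<not> (\<forall>x\<in>Sol layer E P \<theta> T S fv. linp layer E P \<theta> z0 x = \<theta> (B z0))"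
      using Hz by auto
    show "\<theta> \<in> Nset layer E P T S fv z0 \<longleftrightarrow> \<theta> \<in> {\<theta> \<in> space ?M. \<exists>x. F \<theta> x = 0} - (\<Union>m. {\<theta> \<in> space ?M. \<exists>x. Hm m \<theta> x = 0})"
      unfolding Nset_def using e1 e2 by auto
  qed
  then show ?thesis using s1 s2 by simp
qed



lemma Sol_upd:
  assumes arch: "arch_ok layer E" and z0T: "z0 \<notin> T" and le: "\<forall>z\<in>T. layer z \<le> layer z0"
  shows "Sol layer E P (\<theta>(B z0 := y)) T S fv = Sol layer E P \<theta> T S fv"
proof -
  have "linp layer E P (\<theta>(B z0 := y)) z x = linp layer E P \<theta> z x" if "z \<in> T" for z x
    using linp_upd[OF arch] le that by blast
  moreover have "(\<theta>(B z0 := y)) (B z) = \<theta> (B z)" if "z \<in> T" for z using z0T that by auto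
  ultimately show ?thesis unfolding Sol_def by auto
qed

lemma Nset_unique:
  assumes arch: "arch_ok layer E" and z0T: "z0 \<notin> T" and le: "\<forall>z\<in>T. layer z \<le> layer z0"
    and h1: "\<theta>(B z0 := y1) \<in> Nset layer E P T S fv z0" and h2: "\<theta>(B z0 := y2) \<in> Nset layer E P T S fv z0"
  shows "y1 = y2"
proof -
  let ?t1 = "\<theta>(B z0 := y1)"
  have t2: "\<theta>(B z0 := y2) = ?t1(B z0 := y2)" by simp
  have eqS: "Sol layer E P (?t1(B z0 := y2)) T S fv = Sol layer E P ?t1 T S fv"
    by (rule Sol_upd[OF arch z0T le])
  obtain x where x: "x \<in> Sol layer E P ?t1 T S fv" using h1 unfolding Nset_def by blast
  have a1: "linp layer E P ?t1 z0 x = y1" using h1 x unfolding Nset_def by auto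
  have "linp layer E P (?t1(B z0 := y2)) z0 x = y2" using h2 x eqS unfolding Nset_def t2 by auto
  moreover have "linp layer E P (?t1(B z0 := y2)) z0 x = linp layer E P ?t1 z0 x"
    by (rule linp_upd[OF arch]) simp
  ultimately show ?thesis using a1 by simp
qed

lemma Nset_null:
  fixes layer :: "'a::finite \<Rightarrow> nat" and S :: "'n::finite set"
  assumes arch: "arch_ok layer E" and z0T: "z0 \<notin> T" and le: "\<forall>z\<in>T. layer z \<le> layer z0"
  shows "Nset layer E P T S fv z0 \<in> null_sets (PiM (params layer E) (\<lambda>_. lborel))"
proof -
  let ?N = "Nset layer E P T S fv z0"
  let ?I = "params layer E :: ('a, 'n) param set"
  let ?J = "?I - {B z0}"
  interpret ps: product_sigma_finite "\<lambda>_::('a, 'n) param. lborel :: real measure"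
    by unfold_locales
  have iI: "insert (B z0) ?J = ?I" by (auto simp: params_def)
  have Ns: "?N \<in> sets (PiM ?I (\<lambda>_. lborel))" by (rule Nset_sets)
  then have Ns': "?N \<in> sets (PiM (insert (B z0) ?J) (\<lambda>_. lborel))" unfolding iI .
  have fJ: "finite ?J" using finite_params by blast
  have inner: "(\<integral>\<^sup>+ y. indicator ?N (\<theta>'(B z0 := y)) \<partial>lborel) = 0" for \<theta>'
  proof (cases "\<exists>y0. \<theta>'(B z0 := y0) \<in> ?N")
    case True
    then obtain y0 where y0: "\<theta>'(B z0 := y0) \<in> ?N" by blast
    have "AE y in lborel. indicator ?N (\<theta>'(B z0 := y)) = (0::ennreal)"
      using AE_lborel_singleton[of y0]
    proof eventually_elim
      case (elim y)
      then have "\<theta>'(B z0 := y) \<notin> ?N" using Nset_unique[OF arch z0T le _ y0] by blast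
      then show ?case by simp
    qed
    then show ?thesis by (simp add: nn_integral_cong_AE)
  next
    case False
    then show ?thesis by simp
  qed
  have "emeasure (PiM ?I (\<lambda>_. lborel)) ?N = (\<integral>\<^sup>+ \<theta>. indicator ?N \<theta> \<partial>PiM ?I (\<lambda>_. lborel))"
    using Ns by simp
  also have "\<dots> = (\<integral>\<^sup>+ \<theta>. indicator ?N \<theta> \<partial>PiM (insert (B z0) ?J) (\<lambda>_. lborel))" unfolding iI ..
  also have "\<dots> = (\<integral>\<^sup>+ \<theta>'. (\<integral>\<^sup>+ y. indicator ?N (\<theta>'(B z0 := y)) \<partial>lborel) \<partial>PiM ?J (\<lambda>_. lborel))"
    by (rule ps.product_nn_integral_insert[OF fJ]) (simp, rule borel_measurable_indicator[OF Ns'])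
  also have "\<dots> = 0" by (simp add: inner)
  finally show ?thesis using Ns by (simp add: null_sets_def)
qed



lemma AE_Sol:
  fixes layer :: "'a::finite \<Rightarrow> nat" and S :: "'n::finite set"
  assumes arch: "arch_ok layer E"
  shows "AE \<theta> in PiM (params layer E) (\<lambda>_. lborel). Sol layer E P \<theta> T S fv \<noteq> {} \<longrightarrow>
     aff_dim (Sol layer E P \<theta> T S fv) \<le> int CARD('n) - int (card T) - int (card S)"
proof (induction "card T" arbitrary: T)
  case 0
  then have "T = {}" by simp
  then show ?case by (intro AE_I2) (simp add: Sol_empty_upper)
next
  case (Suc c T)
  let ?M = "PiM (params layer E) (\<lambda>_. lborel) :: (('a, 'n) param \<Rightarrow> real) measure"
  have Tne: "T \<noteq> {}" using Suc.hyps(2) by auto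
  define z0 where "z0 = (SOME z. z \<in> T \<and> layer z = Max (layer ` T))"
  have "Max (layer ` T) \<in> layer ` T" using Tne by (intro Max_in) auto
  then have "\<exists>z. z \<in> T \<and> layer z = Max (layer ` T)" by auto
  then have "z0 \<in> T \<and> layer z0 = Max (layer ` T)" unfolding z0_def by (rule someI_ex)
  then have z0: "z0 \<in> T" "layer z0 = Max (layer ` T)" by auto
  have zle: "\<forall>z\<in>T. layer z \<le> layer z0" using z0(2) by simp
  define T' where "T' = T - {z0}"
  have cT': "c = card T'" using Suc.hyps(2) z0(1) unfolding T'_def by simp
  have TT: "T = insert z0 T'" using z0(1) unfolding T'_def by auto
  have z0T': "z0 \<notin> T'" unfolding T'_def by simp
  have le': "\<forall>z\<in>T'. layer z \<le> layer z0" using zle unfolding T'_def by simp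
  have IH: "AE \<theta> in ?M. Sol layer E P \<theta> T' S fv \<noteq> {} \<longrightarrow>
     aff_dim (Sol layer E P \<theta> T' S fv) \<le> int CARD('n) - int (card T') - int (card S)"
    by (rule Suc.hyps(1)[OF cT'])
  have NN: "AE \<theta> in ?M. \<theta> \<notin> Nset layer E P T' S fv z0"
    by (rule AE_not_in[OF Nset_null[OF arch z0T' le']])
  show ?case
    using IH NN AE_space[of ?M]
  proof eventually_elim
    case (elim \<theta>)
    show ?case
    proof
      assume ne: "Sol layer E P \<theta> T S fv \<noteq> {}"
      let ?S' = "Sol layer E P \<theta> T' S fv"
      let ?h = "{x. cvec layer E P \<theta> z0 \<bullet> x = \<theta> (B z0) - cdd layer E P \<theta> z0}"
      have eq: "Sol layer E P \<theta> T S fv = ?S' \<inter> ?h" unfolding TT by (rule Sol_insert)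
      then have ne': "?S' \<noteq> {}" using ne by auto
      have nsub: "\<not> ?S' \<subseteq> ?h"
      proof
        assume sub: "?S' \<subseteq> ?h"
        then have "\<forall>x\<in>?S'. linp layer E P \<theta> z0 x = \<theta> (B z0)" by (auto simp: linp_inner)
        then have "\<theta> \<in> Nset layer E P T' S fv z0" using ne' elim(3) unfolding Nset_def by blast
        then show False using elim(2) by blast
      qed
      have "aff_dim (Sol layer E P \<theta> T S fv) = aff_dim ?S' - 1"
        unfolding eq using aff_dim_affine_Int_hyperplane[OF affine_Sol[of layer E P \<theta> T' S fv], of "cvec layer E P \<theta> z0" "\<theta> (B z0) - cdd layer E P \<theta> z0"]
          ne nsub eq by auto
      moreover have "card T = Suc (card T')" using TT z0T' by simp
      ultimately show "aff_dim (Sol layer E P \<theta> T S fv) \<le> int CARD('n) - int (card T) - int (card S)"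
        using elim(1) ne' by simp
    qed
  qed
qed

lemma AE_GEN:
  fixes layer :: "'a::finite \<Rightarrow> nat" and a :: "real^'n::finite"
  assumes arch: "arch_ok layer E"
  shows "AE \<theta> in PiM (params layer E) (\<lambda>_. lborel). GEN layer E a s \<theta>"
proof -
  have "AE \<theta> in PiM (params layer E) (\<lambda>_. lborel).
    \<forall>q\<in>(UNIV :: ('a set \<times> 'a set \<times> 'n set \<times> ('n \<Rightarrow> bool)) set).
      Sol layer E (fst q) \<theta> (fst (snd q)) (fst (snd (snd q))) (fvals a s (snd (snd (snd q)))) \<noteq> {} \<longrightarrow>
      aff_dim (Sol layer E (fst q) \<theta> (fst (snd q)) (fst (snd (snd q))) (fvals a s (snd (snd (snd q)))))
        \<le> int CARD('n) - int (card (fst (snd q))) - int (card (fst (snd (snd q))))"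
    by (rule AE_finite_allI) (simp_all add: AE_Sol[OF arch])
  then show ?thesis
    by (rule eventually_mono) (auto simp: GEN_def)
qed



theorem mainTheorem13:
  fixes layer :: "'a::finite \<Rightarrow> nat" and E :: "'a \<Rightarrow> 'a \<Rightarrow> bool"
    and \<mu> :: "(('a, 'n::finite) param \<Rightarrow> real) measure"
    and a :: "real^'n" and s :: real and r :: nat
  assumes "arch_ok layer E"
    and "prob_space \<mu>"
    and "sets \<mu> = sets (PiM (params layer E) (\<lambda>_. lborel))"
    and "absolutely_continuous (PiM (params layer E) (\<lambda>_. lborel)) \<mu>"
    and "s > 0"
    and "r \<le> CARD('n)"
  shows "AE \<theta> in \<mu>.
     (\<forall>k \<le> CARD('n). \<forall>x \<in> Xset layer E \<theta> k \<inter> skeleton a s k.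
         \<not> x islimpt (Xset layer E \<theta> k \<inter> skeleton a s k))
   \<and> ecard {region layer E A \<theta> | A. partial_pattern r A \<and> region layer E A \<theta> \<inter> cube a s \<noteq> {}}
       \<le> (\<Sum>k = r..CARD('n). of_nat ((k choose r) * 2 ^ (k - r)) * ecard (Xset layer E \<theta> k \<inter> skeleton a s k))"
proof -
  have "AE \<theta> in \<mu>. GEN layer E a s \<theta>"
    by (rule absolutely_continuous_AE[OF assms(3) assms(4) AE_GEN[OF assms(1)]])
  then show ?thesis
    by (rule eventually_mono) (rule det_main[OF assms(1) _ assms(5)])
qed

end
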